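(* Let $G_1$ and $G_2$ be graphs, where $G_i$ has order $n_i$, minimum degree $\delta_i$, maximum degree $\Delta_i$ and independence number $\alpha(G_i)$, $i\in\{1,2\}$. Then for every integer $k\in\{1-\delta_1-\delta_2,\dots,\Delta_1+\Delta_2\}$, $$\phi_k^d(G_1\times G_2)\ge \alpha(G_1)\alpha(G_2)+\min\{n_1-\alpha(G_1),\,n_2-\alpha(G_2)\}.$$
   Context: All graphs are finite and simple. For a graph $G=(V,E)$, a set $S\subseteq V$ and $v\in V$, let $\delta_S(v)=|\{u\in S: uv\in E\}|$, $\delta(v)$ the degree of $v$, and $\overline{S}=V\setminus S$. For an integer $k$, a non-empty set $S\subseteq V$ is a defensive $k$-alliance if $\delta_S(v)\ge \delta_{\overline S}(v)+k$ for every $v\in S$. A set $X\subseteq V$ is a defensive $k$-alliance free set ($k$-daf set) if no defensive $k$-alliance $S$ satisfies $S\subseteq X$. $\phi_k^d(G)$ denotes the maximum cardinality of a $k$-daf set in $G$. The Cartesian product $G_1\times G_2$ of $G_1=(V_1,E_1)$, $G_2=(V_2,E_2)$ has vertex set $V_1\times V_2$, with $(a,b)$ adjacent to $(c,d)$ iff either $a=c$ and $bd\in E_2$, or $b=d$ and $ac\in E_1$. *)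

theory Defs
  imports Main
begin

definition graph :: "'a set \<Rightarrow> ('a \<Rightarrow> 'a \<Rightarrow> bool) \<Rightarrow> bool" where
  "graph V E \<longleftrightarrow> finite V \<and>
     (\<forall>u v. E u v \<longrightarrow> u \<in> V \<and> v \<in> V \<and> u \<noteq> v \<and> E v u)"

definition deg_in :: "'a set \<Rightarrow> ('a \<Rightarrow> 'a \<Rightarrow> bool) \<Rightarrow> 'a set \<Rightarrow> 'a \<Rightarrow> nat" where
  "deg_in V E S v = card {u \<in> S. E u v}"

definition degree :: "'a set \<Rightarrow> ('a \<Rightarrow> 'a \<Rightarrow> bool) \<Rightarrow> 'a \<Rightarrow> nat" where
  "degree V E v = card {u \<in> V. E u v}"

definition min_degree :: "'a set \<Rightarrow> ('a \<Rightarrow> 'a \<Rightarrow> bool) \<Rightarrow> nat" where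
  "min_degree V E = Min (degree V E ` V)"

definition max_degree :: "'a set \<Rightarrow> ('a \<Rightarrow> 'a \<Rightarrow> bool) \<Rightarrow> nat" where
  "max_degree V E = Max (degree V E ` V)"

definition independent :: "'a set \<Rightarrow> ('a \<Rightarrow> 'a \<Rightarrow> bool) \<Rightarrow> 'a set \<Rightarrow> bool" where
  "independent V E S \<longleftrightarrow> S \<subseteq> V \<and> (\<forall>u\<in>S. \<forall>v\<in>S. \<not> E u v)"

definition indep_number :: "'a set \<Rightarrow> ('a \<Rightarrow> 'a \<Rightarrow> bool) \<Rightarrow> nat" where
  "indep_number V E = Max (card ` {S. independent V E S})"

definition defensive_alliance :: "'a set \<Rightarrow> ('a \<Rightarrow> 'a \<Rightarrow> bool) \<Rightarrow> int \<Rightarrow> 'a set \<Rightarrow> bool" where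
  "defensive_alliance V E k S \<longleftrightarrow> S \<noteq> {} \<and> S \<subseteq> V \<and>
     (\<forall>v\<in>S. int (deg_in V E S v) \<ge> int (deg_in V E (V - S) v) + k)"

definition daf_set :: "'a set \<Rightarrow> ('a \<Rightarrow> 'a \<Rightarrow> bool) \<Rightarrow> int \<Rightarrow> 'a set \<Rightarrow> bool" where
  "daf_set V E k X \<longleftrightarrow> X \<subseteq> V \<and> \<not> (\<exists>S. S \<subseteq> X \<and> defensive_alliance V E k S)"

definition phi_d :: "'a set \<Rightarrow> ('a \<Rightarrow> 'a \<Rightarrow> bool) \<Rightarrow> int \<Rightarrow> nat" where
  "phi_d V E k = Max (card ` {X. daf_set V E k X})"

definition cart_edge :: "('a \<Rightarrow> 'a \<Rightarrow> bool) \<Rightarrow> ('b \<Rightarrow> 'b \<Rightarrow> bool) \<Rightarrow> ('a \<times> 'b) \<Rightarrow> ('a \<times> 'b) \<Rightarrow> bool" where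
  "cart_edge E1 E2 x y \<longleftrightarrow>
     (fst x = fst y \<and> E2 (snd x) (snd y)) \<or> (snd x = snd y \<and> E1 (fst x) (fst y))"

end

theory Submission
  imports Defs
begin

lemma indep_exists:
  assumes "graph V E"
  shows "\<exists>I. independent V E I \<and> card I = indep_number V E"
proof -
  have fin: "finite V" using assms by (simp add: graph_def)
  have "{S. independent V E S} \<subseteq> Pow V" by (auto simp: independent_def)
  hence "finite {S. independent V E S}" using fin by (meson finite_Pow_iff finite_subset)
  moreover have "{} \<in> {S. independent V E S}" by (simp add: independent_def)
  ultimately have "indep_number V E \<in> card ` {S. independent V E S}"
    unfolding indep_number_def by (intro Max_in) auto
  thus ?thesis by auto
qed

lemma deg_ge:
  assumes g1: "graph V1 E1" and g2: "graph V2 E2" and a: "a \<in> V1" and b: "b \<in> V2"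
  shows "min_degree V1 E1 + min_degree V2 E2 \<le> degree (V1 \<times> V2) (cart_edge E1 E2) (a,b)"
proof -
  have f1: "finite V1" and f2: "finite V2" using g1 g2 by (auto simp: graph_def)
  have m1: "min_degree V1 E1 \<le> degree V1 E1 a" unfolding min_degree_def using f1 a by auto
  have m2: "min_degree V2 E2 \<le> degree V2 E2 b" unfolding min_degree_def using f2 b by auto
  let ?A = "(\<lambda>x. (x,b)) ` {u \<in> V1. E1 u a}"
  let ?B = "(\<lambda>y. (a,y)) ` {u \<in> V2. E2 u b}"
  have cA: "card ?A = degree V1 E1 a" unfolding degree_def by (rule card_image) (auto simp: inj_on_def)
  have cB: "card ?B = degree V2 E2 b" unfolding degree_def by (rule card_image) (auto simp: inj_on_def)
  have disj: "?A \<inter> ?B = {}" using g1 unfolding graph_def by auto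
  have sub: "?A \<union> ?B \<subseteq> {u \<in> V1 \<times> V2. cart_edge E1 E2 u (a,b)}"
    using a b by (auto simp: cart_edge_def)
  have fin: "finite {u \<in> V1 \<times> V2. cart_edge E1 E2 u (a,b)}" using f1 f2 by auto
  have cU: "card (?A \<union> ?B) = card ?A + card ?B"
    by (rule card_Un_disjoint) (use f1 f2 disj in auto)
  have "card (?A \<union> ?B) \<le> degree (V1 \<times> V2) (cart_edge E1 E2) (a,b)"
    unfolding degree_def using card_mono[OF fin sub] by simp
  thus ?thesis using m1 m2 cA cB cU by linarith
qed

theorem mainTheorem1:
  fixes V1 :: "'a set" and E1 :: "'a \<Rightarrow> 'a \<Rightarrow> bool"
    and V2 :: "'b set" and E2 :: "'b \<Rightarrow> 'b \<Rightarrow> bool"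
    and k :: int
  assumes "graph V1 E1" and "graph V2 E2"
    and "V1 \<noteq> {}" and "V2 \<noteq> {}"
    and "1 - int (min_degree V1 E1) - int (min_degree V2 E2) \<le> k"
    and "k \<le> int (max_degree V1 E1) + int (max_degree V2 E2)"
  shows "phi_d (V1 \<times> V2) (cart_edge E1 E2) k \<ge>
           indep_number V1 E1 * indep_number V2 E2
           + min (card V1 - indep_number V1 E1) (card V2 - indep_number V2 E2)"
proof -
  note g1 = assms(1) and g2 = assms(2)
  have f1: "finite V1" and f2: "finite V2" using g1 g2 by (auto simp: graph_def)
  have irr1: "\<And>x. \<not> E1 x x" and irr2: "\<And>x. \<not> E2 x x" using g1 g2 by (auto simp: graph_def)
  obtain I1 where I1: "independent V1 E1 I1" "card I1 = indep_number V1 E1"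
    using indep_exists[OF g1] by blast
  obtain I2 where I2: "independent V2 E2 I2" "card I2 = indep_number V2 E2"
    using indep_exists[OF g2] by blast
  have s1: "I1 \<subseteq> V1" and s2: "I2 \<subseteq> V2" using I1 I2 by (auto simp: independent_def)
  define m where "m = min (card V1 - indep_number V1 E1) (card V2 - indep_number V2 E2)"
  have c1: "card (V1 - I1) = card V1 - indep_number V1 E1"
    using I1(2) s1 f1 by (simp add: card_Diff_subset finite_subset)
  have c2: "card (V2 - I2) = card V2 - indep_number V2 E2"
    using I2(2) s2 f2 by (simp add: card_Diff_subset finite_subset)
  obtain A where A: "A \<subseteq> V1 - I1" "card A = m"
    using obtain_subset_with_card_n[of m "V1 - I1"] c1 unfolding m_def by auto
  obtain B where B: "B \<subseteq> V2 - I2" "card B = m"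
    using obtain_subset_with_card_n[of m "V2 - I2"] c2 unfolding m_def by auto
  have fA: "finite A" using A f1 by (meson Diff_subset finite_subset)
  have fB: "finite B" using B f2 by (meson Diff_subset finite_subset)
  obtain f where f: "bij_betw f A B" using finite_same_card_bij[OF fA fB] A B by auto
  define M where "M = (\<lambda>a. (a, f a)) ` A"
  define X where "X = I1 \<times> I2 \<union> M"
  have cM: "card M = m" unfolding M_def using A by (subst card_image) (auto simp: inj_on_def)
  have fI: "finite (I1 \<times> I2)" using f1 f2 s1 s2 by (meson finite_SigmaI finite_subset)
  have fM: "finite M" unfolding M_def using fA by simp
  have dj: "I1 \<times> I2 \<inter> M = {}" unfolding M_def using A by auto
  have cX: "card X = indep_number V1 E1 * indep_number V2 E2 + m"
    unfolding X_def using card_Un_disjoint[OF fI fM dj] cM I1(2) I2(2) by (simp add: card_cartesian_product)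
  have fB': "\<And>a. a \<in> A \<Longrightarrow> f a \<in> B" using f by (auto simp: bij_betw_def)
  have injf: "inj_on f A" using f by (auto simp: bij_betw_def)
  have XV: "X \<subseteq> V1 \<times> V2" unfolding X_def M_def using s1 s2 A B fB' by blast
  have noedge: "\<not> cart_edge E1 E2 u v" if u: "u \<in> X" and v: "v \<in> X" for u v
  proof -
    have i1: "\<And>x y. x \<in> I1 \<Longrightarrow> y \<in> I1 \<Longrightarrow> \<not> E1 x y" using I1(1) by (auto simp: independent_def)
    have i2: "\<And>x y. x \<in> I2 \<Longrightarrow> y \<in> I2 \<Longrightarrow> \<not> E2 x y" using I2(1) by (auto simp: independent_def)
    show ?thesis
    proof (cases "u \<in> M")
      case True
      then obtain a where a: "a \<in> A" "u = (a, f a)" unfolding M_def by auto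
      show ?thesis
      proof (cases "v \<in> M")
        case True
        then obtain a' where a': "a' \<in> A" "v = (a', f a')" unfolding M_def by auto
        show ?thesis using a a' irr1 irr2 injf unfolding cart_edge_def inj_on_def by auto
      next
        case False
        hence "v \<in> I1 \<times> I2" using v unfolding X_def by auto
        thus ?thesis using a A B fB'[OF a(1)] unfolding cart_edge_def by auto
      qed
    next
      case False
      hence uI: "u \<in> I1 \<times> I2" using u unfolding X_def by auto
      show ?thesis
      proof (cases "v \<in> M")
        case True
        then obtain a' where a': "a' \<in> A" "v = (a', f a')" unfolding M_def by auto
        thus ?thesis using uI A B fB'[OF a'(1)] unfolding cart_edge_def by auto
      next
        case False
        hence "v \<in> I1 \<times> I2" using v unfolding X_def by auto
        thus ?thesis using uI i1 i2 unfolding cart_edge_def by auto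
      qed
    qed
  qed
  have daf: "daf_set (V1 \<times> V2) (cart_edge E1 E2) k X"
    unfolding daf_set_def
  proof (intro conjI XV notI)
    assume "\<exists>S. S \<subseteq> X \<and> defensive_alliance (V1 \<times> V2) (cart_edge E1 E2) k S"
    then obtain S where S: "S \<subseteq> X" "defensive_alliance (V1 \<times> V2) (cart_edge E1 E2) k S" by blast
    then obtain v where v: "v \<in> S" unfolding defensive_alliance_def by auto
    have ineq: "int (deg_in (V1 \<times> V2) (cart_edge E1 E2) S v) \<ge>
       int (deg_in (V1 \<times> V2) (cart_edge E1 E2) (V1 \<times> V2 - S) v) + k"
      using S(2) v unfolding defensive_alliance_def by auto
    have "{u \<in> S. cart_edge E1 E2 u v} = {}" using noedge S(1) v by blast
    hence d0: "deg_in (V1 \<times> V2) (cart_edge E1 E2) S v = 0" unfolding deg_in_def by (metis card.empty)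
    have "{u \<in> V1 \<times> V2 - S. cart_edge E1 E2 u v} = {u \<in> V1 \<times> V2. cart_edge E1 E2 u v}"
      using noedge S(1) v by blast
    hence dd: "deg_in (V1 \<times> V2) (cart_edge E1 E2) (V1 \<times> V2 - S) v = degree (V1 \<times> V2) (cart_edge E1 E2) v"
      unfolding deg_in_def degree_def by simp
    obtain a b where ab: "v = (a,b)" "a \<in> V1" "b \<in> V2" using v S(1) XV by auto
    have "min_degree V1 E1 + min_degree V2 E2 \<le> degree (V1 \<times> V2) (cart_edge E1 E2) v"
      using deg_ge[OF g1 g2 ab(2,3)] ab(1) by simp
    thus False using ineq d0 dd assms(5) by linarith
  qed
  have "{X. daf_set (V1 \<times> V2) (cart_edge E1 E2) k X} \<subseteq> Pow (V1 \<times> V2)" by (auto simp: daf_set_def)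
  moreover have "finite (Pow (V1 \<times> V2))" using f1 f2 by simp
  ultimately have "finite (card ` {X. daf_set (V1 \<times> V2) (cart_edge E1 E2) k X})"
    by (meson finite_imageI finite_subset)
  hence "card X \<le> phi_d (V1 \<times> V2) (cart_edge E1 E2) k"
    unfolding phi_d_def using daf by (intro Max_ge) auto
  thus ?thesis using cX m_def by simp
qed

end
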